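(* Let $n\geq 2$, $m\geq 1$, $r\geq 3$ be integers and let $\alpha$ be an integer with $1\leq\alpha<(m+1)^n$. Then $\Gamma_n^{\alpha,r}$ is homotopy equivalent to the induced subcomplex of $\Gamma_n^{\alpha,r}$ on the vertex set $\{x\in V(\Gamma_n^{\alpha,r}) : |x_i|\leq\lfloor r/2\rfloor \text{ and } |x_j|+|x_k|\leq\lceil r/2\rceil \text{ for all } i,j,k\in[n],\ j\neq k\}$.
   Context: $[n]=\{1,\ldots,n\}$. $\mathbb{Z}^n$ carries the Manhattan metric $d(x,y)=\sum_i|x_i-y_i|$; for $X\subseteq\mathbb{Z}^n$, $\mathrm{VR}(X;r)$ is the simplicial complex on $X$ whose simplices are finite subsets of diameter at most $r$. Let $\prec$ be the anti-lexicographic order on $\mathbb{Z}^n$: $x\prec y$ iff at the largest index $i$ with $x_i\neq y_i$ one has $x_i<y_i$. Let $V_m=\{0,\ldots,m\}^n$. Let $H$ be $V_m$ with its first $\alpha$ elements (with respect to $\prec$) removed, $\delta$ the $\prec$-least element of $H$, and $Y=\{x-\delta: x\in H\}$ (so $\mathbf{0}$ is the least element of $Y$). Then $\Gamma_n^{\alpha,r}$ is the link of $\mathbf{0}$ in $\mathrm{VR}(Y;r)$, i.e. the complex of simplices $\tau$ of $\mathrm{VR}(Y;r)$ with $\mathbf{0}\notin\tau$ and $\tau\cup\{\mathbf{0}\}\in\mathrm{VR}(Y;r)$. The induced subcomplex of $K$ on a vertex set $W$ consists of the simplices of $K$ contained in $W$. *)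

theory Defs
  imports "HOL-Analysis.Analysis"
begin

text \<open>Points of Z^n are int lists of length n; coordinate i in [n] is entry i-1.\<close>

definition manhattan :: "int list \<Rightarrow> int list \<Rightarrow> int" where
  "manhattan x y = sum_list (map2 (\<lambda>a b. \<bar>a - b\<bar>) x y)"

definition antilex_less :: "int list \<Rightarrow> int list \<Rightarrow> bool" where
  "antilex_less x y \<longleftrightarrow> length x = length y \<and>
     (\<exists>i<length x. x ! i < y ! i \<and> (\<forall>j. i < j \<and> j < length x \<longrightarrow> x ! j = y ! j))"

definition cube :: "nat \<Rightarrow> nat \<Rightarrow> int list set" where
  "cube n m = {x. length x = n \<and> (\<forall>i<n. 0 \<le> x ! i \<and> x ! i \<le> int m)}"

text \<open>V_m with its first alpha elements (w.r.t. anti-lex order) removed.\<close>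
definition cube_removed :: "nat \<Rightarrow> nat \<Rightarrow> nat \<Rightarrow> int list set" where
  "cube_removed n m \<alpha> = {x \<in> cube n m. \<alpha> \<le> card {y \<in> cube n m. antilex_less y x}}"

definition least_elem :: "int list set \<Rightarrow> int list" where
  "least_elem H = (THE d. d \<in> H \<and> (\<forall>y\<in>H. y \<noteq> d \<longrightarrow> antilex_less d y))"

definition shifted :: "nat \<Rightarrow> nat \<Rightarrow> nat \<Rightarrow> int list set" where
  "shifted n m \<alpha> = (\<lambda>x. map2 (-) x (least_elem (cube_removed n m \<alpha>))) ` cube_removed n m \<alpha>"

definition VR :: "int list set \<Rightarrow> int \<Rightarrow> int list set set" where
  "VR X r = {\<sigma>. \<sigma> \<noteq> {} \<and> finite \<sigma> \<and> \<sigma> \<subseteq> X \<and> (\<forall>x\<in>\<sigma>. \<forall>y\<in>\<sigma>. manhattan x y \<le> r)}"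

definition link :: "'v set set \<Rightarrow> 'v \<Rightarrow> 'v set set" where
  "link K v = {\<tau> \<in> K. v \<notin> \<tau> \<and> insert v \<tau> \<in> K}"

definition Gamma :: "nat \<Rightarrow> nat \<Rightarrow> nat \<Rightarrow> int \<Rightarrow> int list set set" where
  "Gamma n m \<alpha> r = link (VR (shifted n m \<alpha>) r) (replicate n 0)"

definition vertices :: "'v set set \<Rightarrow> 'v set" where
  "vertices K = {v. {v} \<in> K}"

definition induced :: "'v set set \<Rightarrow> 'v set \<Rightarrow> 'v set set" where
  "induced K W = {\<sigma> \<in> K. \<sigma> \<subseteq> W}"

definition geom_real :: "'v set set \<Rightarrow> ('v \<Rightarrow> real) topology" where
  "geom_real K = subtopology (powertop_real UNIV)
     {f. (\<forall>v. 0 \<le> f v) \<and> (\<exists>\<sigma>\<in>K. {v. f v \<noteq> 0} \<subseteq> \<sigma> \<and> sum f \<sigma> = 1)}"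

end

theory Submission
  imports Defs
begin


lemma topspace_geom_real:
  "topspace (geom_real K) = {f. (\<forall>v. 0 \<le> f v) \<and> (\<exists>\<sigma>\<in>K. {v. f v \<noteq> 0} \<subseteq> \<sigma> \<and> sum f \<sigma> = 1)}"
  by (simp add: geom_real_def)

lemma geom_remove_dominated:
  fixes K K' :: "'v set set" and v w :: 'v
  assumes fin: "\<And>\<sigma>. \<sigma> \<in> K \<Longrightarrow> finite \<sigma>"
    and dom: "\<And>\<sigma>. \<sigma> \<in> K \<Longrightarrow> v \<in> \<sigma> \<Longrightarrow> insert w \<sigma> \<in> K"
    and del: "\<And>\<sigma>. \<sigma> \<in> K \<Longrightarrow> \<sigma> - {v} \<noteq> {} \<Longrightarrow> \<sigma> - {v} \<in> K'"
    and sub: "K' \<subseteq> K" and nv: "\<And>\<sigma>. \<sigma> \<in> K' \<Longrightarrow> v \<notin> \<sigma>"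
    and vw: "v \<noteq> w"
  shows "geom_real K homotopy_equivalent_space geom_real K'"
proof -
  define hh where "hh = (\<lambda>(t::real, f::'v\<Rightarrow>real). \<lambda>u. f u - (if u = v then (1 - t) * f v else 0)
                                         + (if u = w then (1 - t) * f v else 0))"
  define \<rho> where "\<rho> = (\<lambda>f. hh (0, f))"
  let ?X = "geom_real K" and ?Y = "geom_real K'"
  have key: "\<exists>\<tau>\<in>K. {u. f u \<noteq> 0} \<subseteq> \<tau> \<and> sum f \<tau> = 1 \<and> (v \<in> \<tau> \<longrightarrow> w \<in> \<tau>)"
    if "f \<in> topspace ?X" for f
  proof -
    from that obtain \<sigma> where s: "\<sigma> \<in> K" "{u. f u \<noteq> 0} \<subseteq> \<sigma>" "sum f \<sigma> = 1"
      by (auto simp: topspace_geom_real)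
    show ?thesis
    proof (cases "v \<in> \<sigma>")
      case True
      have "sum f (insert w \<sigma>) = sum f \<sigma>"
        using s fin[OF s(1)] by (cases "w \<in> \<sigma>") (auto simp: sum.insert insert_absorb)
      then show ?thesis using s True dom[OF s(1) True] by (intro bexI[of _ "insert w \<sigma>"]) auto
    next
      case False
      then show ?thesis using s by blast
    qed
  qed
  have hh_in: "hh (t, f) \<in> topspace ?X \<and> (\<exists>\<tau>\<in>K. {u. hh (t, f) u \<noteq> 0} \<subseteq> \<tau> \<and> sum (hh (t, f)) \<tau> = 1
        \<and> (t = 0 \<longrightarrow> hh (t, f) v = 0))"
    if fX: "f \<in> topspace ?X" and t01: "t \<in> {0..1}" for f t
  proof -
    obtain \<tau> where t: "\<tau> \<in> K" "{u. f u \<noteq> 0} \<subseteq> \<tau>" "sum f \<tau> = 1" "v \<in> \<tau> \<longrightarrow> w \<in> \<tau>"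
      using key[OF fX] by blast
    have nn: "\<And>u. 0 \<le> f u" using fX by (auto simp: topspace_geom_real)
    have nn2: "0 \<le> hh (t, f) u" for u
    proof -
      have "0 \<le> (1 - t) * f v" using t01 nn by simp
      moreover have "(1 - t) * f v \<le> f v" using t01 nn[of v] by (simp add: mult_left_le_one_le)
      ultimately show ?thesis using vw nn[of u] by (auto simp: hh_def)
    qed
    have supp: "{u. hh (t, f) u \<noteq> 0} \<subseteq> \<tau>"
    proof
      fix u assume "u \<in> {u. hh (t, f) u \<noteq> 0}"
      then have "f u \<noteq> 0 \<or> (u = w \<and> f v \<noteq> 0)" by (auto simp: hh_def split: if_splits)
      then show "u \<in> \<tau>" using t(2,4) by blast
    qed
    have sm: "sum (hh (t, f)) \<tau> = 1"
    proof (cases "v \<in> \<tau>")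
      case True
      then have "w \<in> \<tau>" using t(4) by blast
      let ?c = "(1 - t) * f v"
      have "sum (hh (t,f)) \<tau> = sum f \<tau> - sum (\<lambda>u. if u = v then ?c else 0) \<tau> + sum (\<lambda>u. if u = w then ?c else 0) \<tau>"
        unfolding hh_def by (simp only: prod.case sum.distrib sum_subtractf)
      also have "\<dots> = 1" using True \<open>w \<in> \<tau>\<close> fin[OF t(1)] t(3) by (simp only: sum.delta if_True)
      finally show ?thesis .
    next
      case False
      then have "f v = 0" using t(2) by blast
      then have "hh (t, f) = f" by (auto simp: hh_def)
      then show ?thesis using t(3) by simp
    qed
    have "t = 0 \<longrightarrow> hh (t, f) v = 0" using vw by (simp add: hh_def)
    then show ?thesis using nn2 supp sm t(1) by (auto simp: topspace_geom_real)
  qed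
  have \<rho>Y: "\<rho> f \<in> topspace ?Y" if fX: "f \<in> topspace ?X" for f
  proof -
    obtain \<tau> where t: "\<tau> \<in> K" "{u. hh (0, f) u \<noteq> 0} \<subseteq> \<tau>" "sum (hh (0,f)) \<tau> = 1" "hh (0, f) v = 0"
      and nn: "hh (0, f) \<in> topspace ?X"
      using hh_in[OF fX, of 0] by auto
    have ne: "\<tau> - {v} \<noteq> {}"
    proof
      assume "\<tau> - {v} = {}"
      then have "\<tau> \<subseteq> {v}" by blast
      then have "sum (hh (0, f)) \<tau> = 0" using t(4)
        by (metis (no_types, lifting) empty_iff insertE subset_eq sum.neutral)
      then show False using t(3) by simp
    qed
    have "sum (hh (0,f)) (\<tau> - {v}) = 1"
      using t(3,4) fin[OF t(1)] by (cases "v \<in> \<tau>") (auto simp: sum_diff1)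
    moreover have "{u. hh (0, f) u \<noteq> 0} \<subseteq> \<tau> - {v}" using t(2,4) by auto
    ultimately show ?thesis using del[OF t(1) ne] nn unfolding \<rho>_def
      by (auto simp: topspace_geom_real)
  qed
  have Yfix: "\<rho> f = f" if "f \<in> topspace ?Y" for f
  proof -
    from that obtain \<sigma> where "\<sigma> \<in> K'" "{u. f u \<noteq> 0} \<subseteq> \<sigma>"
      by (auto simp: topspace_geom_real)
    then have "f v = 0" using nv by blast
    then show ?thesis by (auto simp: \<rho>_def hh_def)
  qed
  have YX: "topspace ?Y \<subseteq> topspace ?X"
    using sub by (auto simp: topspace_geom_real)
  have conthh: "continuous_map (prod_topology (top_of_set {0..1}) ?X) (powertop_real UNIV) hh"
  proof -
    have proj: "continuous_map (prod_topology (top_of_set {0..1}) ?X) euclideanreal (\<lambda>x. snd x u)" for u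
    proof -
      have "continuous_map ?X euclideanreal (\<lambda>f. f u)"
        unfolding geom_real_def
        by (rule continuous_map_from_subtopology) (rule continuous_map_product_projection, simp)
      then show ?thesis
        using continuous_map_compose[OF continuous_map_snd] by (simp add: o_def)
    qed
    have fst: "continuous_map (prod_topology (top_of_set {0..1}) ?X) euclideanreal fst"
      using continuous_map_compose[OF continuous_map_fst continuous_map_from_subtopology[OF continuous_map_id]]
      by (simp add: o_def)
    show ?thesis
      unfolding continuous_map_componentwise_UNIV
    proof
      fix u
      show "continuous_map (prod_topology (top_of_set {0..1}) ?X) euclideanreal (\<lambda>x. hh x u)"
      proof (cases "u = v")
        case True
        then have "(\<lambda>x. hh x u) = (\<lambda>x. snd x u - (1 - fst x) * snd x v)" using vw
          by (auto simp: hh_def)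
        then show ?thesis by (simp only:) (intro continuous_intros proj fst)
      next
        case False
        show ?thesis
        proof (cases "u = w")
          case True
          then have "(\<lambda>x. hh x u) = (\<lambda>x. snd x u + (1 - fst x) * snd x v)" using vw
            by (auto simp: hh_def)
          then show ?thesis by (simp only:) (intro continuous_intros proj fst)
        next
          case False
          then have "(\<lambda>x. hh x u) = (\<lambda>x. snd x u)" using \<open>u \<noteq> v\<close>
            by (auto simp: hh_def)
          then show ?thesis by (simp only:) (intro continuous_intros proj fst)
        qed
      qed
    qed
  qed
  have conthhX: "continuous_map (prod_topology (top_of_set {0..1}) ?X) ?X hh"
  proof -
    have "hh ` topspace (prod_topology (top_of_set {0..1}) ?X) \<subseteq> topspace ?X"
      using hh_in by auto
    then show ?thesis
      using conthh unfolding geom_real_def[of K] continuous_map_in_subtopology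
      by (simp add: geom_real_def image_subset_iff_funcset)
  qed
  have hom: "homotopic_with (\<lambda>x. True) ?X ?X \<rho> id"
  proof -
    have h1: "\<forall>x. hh (0,x) = \<rho> x" by (simp add: \<rho>_def)
    have h2: "\<forall>x. hh (1,x) = id x" by (auto simp: hh_def fun_eq_iff)
    show ?thesis unfolding homotopic_with_def using conthhX h1 h2 by blast
  qed
  have c\<rho>: "continuous_map ?X ?Y \<rho>"
  proof -
    have "continuous_map ?X (powertop_real UNIV) \<rho>"
    proof -
      have "continuous_map ?X (prod_topology (top_of_set {0..1}) ?X) (\<lambda>f. (0::real, f))"
        by (intro continuous_map_pairedI) (auto simp: continuous_map_const)
      from continuous_map_compose[OF this conthh] show ?thesis by (simp add: o_def \<rho>_def)
    qed
    then show ?thesis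
      using \<rho>Y unfolding geom_real_def[of K'] continuous_map_in_subtopology
      by (auto simp: geom_real_def)
  qed
  have cid: "continuous_map ?Y ?X id"
  proof -
    have "continuous_map ?Y (powertop_real UNIV) id"
      unfolding geom_real_def by (intro continuous_map_from_subtopology continuous_map_id)
    then show ?thesis
      using YX unfolding geom_real_def[of K] continuous_map_in_subtopology
      by (simp add: geom_real_def image_subset_iff_funcset[symmetric])
  qed
  have "retraction_maps ?X ?Y \<rho> id"
    unfolding retraction_maps_def using c\<rho> cid Yfix by auto
  then show ?thesis
    using deformation_retract_imp_homotopy_equivalent_space hom by blast
qed



lemma manhattan_sym: "manhattan x y = manhattan y x"
proof (induction x arbitrary: y)
  case Nil then show ?case by (simp add: manhattan_def)
next
  case (Cons a x) then show ?case
    by (cases y) (simp_all add: manhattan_def abs_minus_commute)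
qed

lemma manhattan_self: "manhattan x x = 0"
  by (induction x) (simp_all add: manhattan_def)

lemma VR_remove:
  assumes "v \<in> X" "w \<in> X" "w \<noteq> v" "0 \<le> r"
    and dom: "\<And>z. z \<in> X \<Longrightarrow> manhattan z v \<le> r \<Longrightarrow> manhattan z w \<le> r"
  shows "geom_real (VR X r) homotopy_equivalent_space geom_real (VR (X - {v}) r)"
proof (rule geom_remove_dominated[where v = v and w = w])
  show "finite \<sigma>" if "\<sigma> \<in> VR X r" for \<sigma> using that by (simp add: VR_def)
  show "insert w \<sigma> \<in> VR X r" if s: "\<sigma> \<in> VR X r" "v \<in> \<sigma>" for \<sigma>
  proof -
    have "manhattan y w \<le> r" if "y \<in> \<sigma>" for y
      using s that dom by (auto simp: VR_def)
    then show ?thesis using s assms(2,4)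
      by (auto simp: VR_def manhattan_self manhattan_sym[of w])
  qed
  show "\<sigma> - {v} \<in> VR (X - {v}) r" if "\<sigma> \<in> VR X r" "\<sigma> - {v} \<noteq> {}" for \<sigma>
    using that by (auto simp: VR_def)
  show "VR (X - {v}) r \<subseteq> VR X r" by (auto simp: VR_def)
  show "v \<notin> \<sigma>" if "\<sigma> \<in> VR (X - {v}) r" for \<sigma> using that by (auto simp: VR_def)
  show "v \<noteq> w" using assms(3) by simp
qed

lemma VR_collapse:
  fixes rk :: "int list \<Rightarrow> int"
  assumes fin: "finite X" and WX: "W \<subseteq> X" and r: "0 \<le> r"
    and dom: "\<And>v. v \<in> X - W \<Longrightarrow> \<exists>w\<in>X. w \<noteq> v \<and> rk w < rk v \<and>
                 (\<forall>z\<in>X. manhattan z v \<le> r \<longrightarrow> manhattan z w \<le> r)"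
  shows "geom_real (VR X r) homotopy_equivalent_space geom_real (VR W r)"
proof -
  have main: "\<And>X'. card (X' - W) = k \<Longrightarrow> W \<subseteq> X' \<Longrightarrow> X' \<subseteq> X \<Longrightarrow>
      (\<forall>v\<in>X' - W. \<forall>u\<in>X. rk u < rk v \<longrightarrow> u \<in> X') \<Longrightarrow>
      geom_real (VR X' r) homotopy_equivalent_space geom_real (VR W r)" for k
  proof (induction k rule: less_induct)
    case (less k X')
    have finX': "finite X'" using less.prems(3) fin finite_subset by blast
    show ?case
    proof (cases "X' - W = {}")
      case True
      then have "X' = W" using less.prems(2) by blast
      then show ?thesis by (simp add: homotopy_equivalent_space_refl)
    next
      case False
      let ?M = "Max (rk ` (X' - W))"
      have "?M \<in> rk ` (X' - W)" using False finX' by (intro Max_in) auto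
      then obtain v where v: "v \<in> X' - W" "rk v = ?M" by auto
      have vmax: "rk u \<le> rk v" if "u \<in> X' - W" for u
        using v(2) that finX' by (simp add: Max_ge)
      obtain w where w: "w \<in> X" "w \<noteq> v" "rk w < rk v"
        and wd: "\<forall>z\<in>X. manhattan z v \<le> r \<longrightarrow> manhattan z w \<le> r"
        using dom[of v] v(1) less.prems(3) by blast
      have wX': "w \<in> X'" using less.prems(4) v(1) w by blast
      have step: "geom_real (VR X' r) homotopy_equivalent_space geom_real (VR (X' - {v}) r)"
      proof (rule VR_remove[of v X' w r])
        show "manhattan z w \<le> r" if "z \<in> X'" "manhattan z v \<le> r" for z
          using that wd less.prems(3) by blast
      qed (use v(1) wX' w(2) r in auto)
      have card: "card ((X' - {v}) - W) < k"
        using less.prems(1) v(1) finX' by (metis Diff_insert2 card_Diff1_less finite_Diff insert_Diff_single Diff_insert)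
      have "geom_real (VR (X' - {v}) r) homotopy_equivalent_space geom_real (VR W r)"
      proof (rule less.IH[OF card refl])
        show "W \<subseteq> X' - {v}" using less.prems(2) v(1) by blast
        show "X' - {v} \<subseteq> X" using less.prems(3) by blast
        show "\<forall>v'\<in>X' - {v} - W. \<forall>u\<in>X. rk u < rk v' \<longrightarrow> u \<in> X' - {v}"
        proof (intro ballI impI)
          fix v' u assume a: "v' \<in> X' - {v} - W" "u \<in> X" "rk u < rk v'"
          then have "u \<in> X'" using less.prems(4) by blast
          moreover have "u \<noteq> v" using a vmax[of v'] by auto
          ultimately show "u \<in> X' - {v}" by blast
        qed
      qed
      then show ?thesis using step homotopy_eqv_trans by blast
    qed
  qed
  show ?thesis using main[OF refl WX order.refl] by blast
qed



definition nrm :: "int list \<Rightarrow> int" where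
  "nrm y = (\<Sum>l<length y. \<bar>y ! l\<bar>)"

lemma manhattan_nth:
  assumes "length x = length y"
  shows "manhattan x y = (\<Sum>l<length x. \<bar>x ! l - y ! l\<bar>)"
  using assms by (simp add: manhattan_def sum_list_sum_nth atLeast0LessThan)

lemma antilex_pos_witness:
  assumes "antilex_less (replicate n 0) y"
  shows "length y = n \<and> (\<exists>i<n. 0 < y ! i \<and> (\<forall>j. i < j \<and> j < n \<longrightarrow> y ! j = 0))"
  using assms by (auto simp: antilex_less_def)

lemma antilex_posI:
  assumes "length y = n" "i < n" "0 < y ! i" "\<And>j. i < j \<Longrightarrow> j < n \<Longrightarrow> y ! j = 0"
  shows "antilex_less (replicate n 0) y"
  using assms unfolding antilex_less_def by auto

lemma reduce:
  fixes y :: "int list" and r :: int and S :: "nat set"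
  assumes len: "length y = n" and Sn: "S \<subseteq> {..<n}" and Sne: "S \<noteq> {}" and Sc: "card S \<le> 2"
    and nz: "\<And>l. l \<in> S \<Longrightarrow> y ! l \<noteq> 0"
    and big: "2 * (\<Sum>l\<in>S. \<bar>y ! l\<bar>) \<ge> nrm y + int (card S)"
    and i: "i < n" "0 < y ! i" "\<And>j. i < j \<Longrightarrow> j < n \<Longrightarrow> y ! j = 0"
    and iS: "i \<notin> S \<or> y ! i \<ge> 2"
  shows "\<exists>w. length w = n \<and> (\<forall>l<n. (0 \<le> w!l \<and> w!l \<le> y!l) \<or> (y!l \<le> w!l \<and> w!l \<le> 0))
    \<and> antilex_less (replicate n 0) w \<and> nrm w < nrm y
    \<and> (\<forall>z. length z = n \<longrightarrow> nrm z \<le> r \<longrightarrow> manhattan z y \<le> r \<longrightarrow> manhattan z w \<le> r)"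
proof -
  define w where "w = map (\<lambda>l. if l \<in> S then (if y ! l > 0 then y ! l - 1 else y ! l + 1) else y ! l) [0..<n]"
  have lw: "length w = n" by (simp add: w_def)
  have wl: "w ! l = (if l \<in> S then (if y ! l > 0 then y ! l - 1 else y ! l + 1) else y ! l)" if "l < n" for l
    using that by (simp add: w_def)
  have finS: "finite S" using Sn finite_subset by blast
  have bet: "\<forall>l<n. (0 \<le> w!l \<and> w!l \<le> y!l) \<or> (y!l \<le> w!l \<and> w!l \<le> 0)"
  proof (intro allI impI)
    fix l assume "l < n" then show "(0 \<le> w!l \<and> w!l \<le> y!l) \<or> (y!l \<le> w!l \<and> w!l \<le> 0)"
      using nz[of l] by (auto simp: wl)
  qed
  have pos: "antilex_less (replicate n 0) w"
  proof (rule antilex_posI[OF lw i(1)])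
    show "0 < w ! i" using i iS by (auto simp: wl)
    show "w ! j = 0" if "i < j" "j < n" for j using i(3)[OF that] that nz by (auto simp: wl)
  qed
  have absw: "\<bar>w ! l\<bar> = \<bar>y ! l\<bar> - (if l \<in> S then 1 else 0)" if "l < n" for l
    using that nz[of l] by (auto simp: wl)
  have "nrm w = (\<Sum>l<n. \<bar>y ! l\<bar> - (if l \<in> S then 1 else 0))"
    unfolding nrm_def lw using absw by (intro sum.cong) auto
  also have "\<dots> = nrm y - (\<Sum>l<n. (if l \<in> S then 1 else 0))"
    by (simp add: nrm_def len sum_subtractf)
  also have "(\<Sum>l<n. (if l \<in> S then 1 else 0)) = (int (card S))"
    using Sn by (simp add: sum.If_cases Int_absorb1)
  finally have nw: "nrm w = nrm y - int (card S)" .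
  have cS: "card S \<ge> 1" using Sne finS by (simp add: Suc_le_eq card_gt_0_iff)
  have domi: "manhattan z w \<le> r" if z: "length z = n" "nrm z \<le> r" "manhattan z y \<le> r" for z
  proof -
    have dzy: "manhattan z y = (\<Sum>l<n. \<bar>z ! l - y ! l\<bar>)" using z len by (simp add: manhattan_nth)
    have dzw: "manhattan z w = (\<Sum>l<n. \<bar>z ! l - w ! l\<bar>)" using z lw by (simp add: manhattan_nth)
    have nz': "nrm z = (\<Sum>l<n. \<bar>z ! l\<bar>)" using z by (simp add: nrm_def)
    define B where "B l \<longleftrightarrow> (y ! l > 0 \<and> z ! l \<ge> y ! l) \<or> (y ! l < 0 \<and> z ! l \<le> y ! l)" for l
    show ?thesis
    proof (cases "\<exists>l0\<in>S. \<not> B l0")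
      case True
      then obtain l0 where l0: "l0 \<in> S" "\<not> B l0" by blast
      have l0n: "l0 < n" using l0 Sn by auto
      have pt: "\<bar>z ! l - w ! l\<bar> \<le> \<bar>z ! l - y ! l\<bar> + (if l \<in> S then 1 else 0) - (if l = l0 then 2 else 0)"
        if "l < n" for l
        using that l0 nz[of l] unfolding B_def by (auto simp: wl)
      have "manhattan z w \<le> (\<Sum>l<n. \<bar>z ! l - y ! l\<bar> + (if l \<in> S then 1 else 0) - (if l = l0 then 2 else 0))"
        unfolding dzw by (rule sum_mono) (simp add: pt)
      also have "\<dots> = manhattan z y + int (card S) - 2"
        using Sn l0n by (simp add: dzy sum.distrib sum_subtractf sum.If_cases Int_absorb1)
      finally show ?thesis using Sc z(3) by linarith
    next
      case False
      then have allB: "\<And>l. l \<in> S \<Longrightarrow> B l" by blast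
      have pt: "\<bar>z ! l - w ! l\<bar> \<le> \<bar>z ! l\<bar> + \<bar>y ! l\<bar> + (if l \<in> S then 1 - 2 * \<bar>y ! l\<bar> else 0)"
        if "l < n" for l
      proof (cases "l \<in> S")
        case True
        then show ?thesis using that allB[OF True] nz[OF True] unfolding B_def by (auto simp: wl)
      next
        case False
        then show ?thesis using that by (auto simp: wl)
      qed
      have "manhattan z w \<le> (\<Sum>l<n. \<bar>z ! l\<bar> + \<bar>y ! l\<bar> + (if l \<in> S then 1 - 2 * \<bar>y ! l\<bar> else 0))"
        unfolding dzw by (rule sum_mono) (simp add: pt)
      also have "\<dots> = nrm z + nrm y + (\<Sum>l\<in>S. 1 - 2 * \<bar>y ! l\<bar>)"
        using Sn z(1) by (simp add: nrm_def len sum.distrib sum.If_cases Int_absorb1)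
      also have "(\<Sum>l\<in>S. 1 - 2 * \<bar>y ! l\<bar>) = int (card S) - 2 * (\<Sum>l\<in>S. \<bar>y ! l\<bar>)"
        by (simp add: sum_subtractf sum_distrib_left)
      finally show ?thesis using big z(2) by linarith
    qed
  qed
  show ?thesis
    using lw bet pos nw cS domi by (intro exI[of _ w]) auto
qed



lemma comb:
  fixes y :: "int list" and r :: int
  assumes len: "length y = n" and r3: "r \<ge> 3" and pos: "antilex_less (replicate n 0) y"
    and ny: "nrm y \<le> r"
    and notP: "\<not> ((\<forall>i<n. \<bar>y!i\<bar> \<le> r div 2) \<and> (\<forall>j<n. \<forall>k<n. j \<noteq> k \<longrightarrow> \<bar>y!j\<bar> + \<bar>y!k\<bar> \<le> (r+1) div 2))"
  shows "\<exists>w. length w = n \<and> (\<forall>l<n. (0 \<le> w!l \<and> w!l \<le> y!l) \<or> (y!l \<le> w!l \<and> w!l \<le> 0))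
    \<and> antilex_less (replicate n 0) w \<and> nrm w < nrm y
    \<and> (\<forall>z. length z = n \<longrightarrow> nrm z \<le> r \<longrightarrow> manhattan z y \<le> r \<longrightarrow> manhattan z w \<le> r)"
proof -
  obtain i where i: "i < n" "0 < y ! i" "\<And>j. i < j \<Longrightarrow> j < n \<Longrightarrow> y ! j = 0"
    using antilex_pos_witness[OF pos] by blast
  have d1: "2 * (r div 2) \<le> r" "2 * (r div 2) \<ge> r - 1" by presburger+
  have d2: "2 * ((r + 1) div 2) \<ge> r" "2 * ((r + 1) div 2) \<le> r + 1" by presburger+
  have d3: "r div 2 \<ge> 1" using r3 by presburger
  show ?thesis
  proof (cases "\<exists>j<n. \<bar>y!j\<bar> > r div 2")
    case True
    then obtain j where j: "j < n" "\<bar>y!j\<bar> > r div 2" by blast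
    show ?thesis
    proof (rule reduce[OF len _ _ _ _ _ i, of "{j}"])
      show "2 * (\<Sum>l\<in>{j}. \<bar>y ! l\<bar>) \<ge> nrm y + int (card {j})" using j d1 ny by simp
      show "i \<notin> {j} \<or> y ! i \<ge> 2" using j d3 i(2) by auto
    qed (use j d3 in auto)
  next
    case False
    then have allle: "\<And>l. l < n \<Longrightarrow> \<bar>y!l\<bar> \<le> r div 2" by force
    then obtain j k where jk: "j < n" "k < n" "j \<noteq> k" "\<bar>y!j\<bar> + \<bar>y!k\<bar> > (r+1) div 2"
      using notP by force
    have nzj: "y ! j \<noteq> 0" using jk allle[of k] d1 d2 by auto
    have nzk: "y ! k \<noteq> 0" using jk allle[of j] d1 d2 by auto
    show ?thesis
    proof (cases "(i \<noteq> j \<or> y!i \<ge> 2) \<and> (i \<noteq> k \<or> y!i \<ge> 2)")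
      case True
      show ?thesis
      proof (rule reduce[OF len _ _ _ _ _ i, of "{j,k}"])
        show "2 * (\<Sum>l\<in>{j,k}. \<bar>y ! l\<bar>) \<ge> nrm y + int (card {j,k})" using jk d2 ny by simp
        show "i \<notin> {j,k} \<or> y ! i \<ge> 2" using True by auto
      qed (use jk nzj nzk in auto)
    next
      case False
      then have yi1: "y ! i = 1" and ijk: "i = j \<or> i = k" using i(2) by auto
      obtain q where q: "q < n" "q \<noteq> i" "\<bar>y!q\<bar> + 1 > (r+1) div 2" "y ! q \<noteq> 0"
      proof (cases "i = j")
        case True
        then show ?thesis using that[of k] jk yi1 nzk by auto
      next
        case False
        then have "i = k" using ijk by blast
        then show ?thesis using that[of j] jk yi1 nzj by auto
      qed
      have o2: "2 * \<bar>y!q\<bar> = r" using q allle[OF q(1)] d1 d2 by linarith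
      show ?thesis
      proof (cases "nrm y \<le> r - 1")
        case True
        show ?thesis
        proof (rule reduce[OF len _ _ _ _ _ i, of "{q}"])
          show "2 * (\<Sum>l\<in>{q}. \<bar>y ! l\<bar>) \<ge> nrm y + int (card {q})" using o2 True by simp
          show "i \<notin> {q} \<or> y ! i \<ge> 2" using q by auto
        qed (use q in auto)
      next
        case False
        have "\<exists>l<n. l \<noteq> q \<and> l \<noteq> i \<and> y ! l \<noteq> 0"
        proof (rule ccontr)
          assume "\<not> ?thesis"
          then have zero: "\<And>l. l < n \<Longrightarrow> l \<notin> {q, i} \<Longrightarrow> y ! l = 0" by blast
          have "nrm y = (\<Sum>l\<in>{q,i}. \<bar>y ! l\<bar>)"
            unfolding nrm_def len
            by (rule sum.mono_neutral_right) (use q i zero in auto)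
          also have "\<dots> = \<bar>y!q\<bar> + 1" using q yi1 by simp
          finally show False using False o2 ny r3 by linarith
        qed
        then obtain l where l: "l < n" "l \<noteq> q" "l \<noteq> i" "y ! l \<noteq> 0" by blast
        show ?thesis
        proof (rule reduce[OF len _ _ _ _ _ i, of "{q,l}"])
          show "2 * (\<Sum>l\<in>{q,l}. \<bar>y ! l\<bar>) \<ge> nrm y + int (card {q,l})" using o2 l ny by simp
          show "i \<notin> {q,l} \<or> y ! i \<ge> 2" using q l by auto
        qed (use q l in auto)
      qed
    qed
  qed
qed



lemma antilex_irrefl: "\<not> antilex_less x x"
  by (auto simp: antilex_less_def)

lemma antilex_trans:
  assumes "antilex_less x y" "antilex_less y z"
  shows "antilex_less x z"
proof -
  obtain i where i: "length x = length y" "i < length x" "x ! i < y ! i" "\<forall>j. i < j \<and> j < length x \<longrightarrow> x ! j = y ! j"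
    using assms(1) by (auto simp: antilex_less_def)
  obtain k where k: "length y = length z" "k < length y" "y ! k < z ! k" "\<forall>j. k < j \<and> j < length y \<longrightarrow> y ! j = z ! j"
    using assms(2) by (auto simp: antilex_less_def)
  show ?thesis
  proof (cases i k rule: linorder_cases)
    case less
    then show ?thesis unfolding antilex_less_def using i k
      by (intro conjI exI[of _ k]) auto
  next
    case equal
    then show ?thesis unfolding antilex_less_def using i k
      by (intro conjI exI[of _ k]) auto
  next
    case greater
    then show ?thesis unfolding antilex_less_def using i k
      by (intro conjI exI[of _ i]) auto
  qed
qed

lemma antilex_total:
  assumes "length x = length y" "x \<noteq> y"
  shows "antilex_less x y \<or> antilex_less y x"
proof -
  let ?D = "{i. i < length x \<and> x ! i \<noteq> y ! i}"
  have ne: "?D \<noteq> {}" using assms nth_equalityI by blast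
  have fin: "finite ?D" by simp
  define i where "i = Max ?D"
  have iD: "i \<in> ?D" unfolding i_def using ne fin by (intro Max_in) auto
  have above: "x ! j = y ! j" if "i < j" "j < length x" for j
  proof (rule ccontr)
    assume "x ! j \<noteq> y ! j"
    then have "j \<in> ?D" using that by simp
    then have "j \<le> i" unfolding i_def using fin by (intro Max_ge) auto
    then show False using that by simp
  qed
  show ?thesis
  proof (cases "x ! i < y ! i")
    case True
    then show ?thesis using iD above assms(1) unfolding antilex_less_def by blast
  next
    case False
    then have "y ! i < x ! i" using iD by auto
    then have "antilex_less y x" unfolding antilex_less_def using iD above assms(1)
      by (intro conjI exI[of _ i]) auto
    then show ?thesis by blast
  qed
qed

lemma antilex_diff:
  assumes "length a = length b" "length a' = length b'" "length a = length a'"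
    and d: "\<And>i. i < length a \<Longrightarrow> b ! i - a ! i = b' ! i - a' ! i"
  shows "antilex_less a b = antilex_less a' b'"
proof -
  have e1: "(a!i < b!i) = (a'!i < b'!i)" if "i < length a" for i using d[OF that] by linarith
  have e2: "(a!i = b!i) = (a'!i = b'!i)" if "i < length a" for i using d[OF that] by linarith
  show ?thesis
  proof
    assume "antilex_less a b"
    then obtain i where "i < length a" "a!i < b!i" "\<forall>j. i < j \<and> j < length a \<longrightarrow> a!j = b!j"
      unfolding antilex_less_def by blast
    then show "antilex_less a' b'" unfolding antilex_less_def using assms(1-3) e1 e2
      by (intro conjI exI[of _ i]) auto
  next
    assume "antilex_less a' b'"
    then obtain i where "i < length a" "a'!i < b'!i" "\<forall>j. i < j \<and> j < length a \<longrightarrow> a'!j = b'!j"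
      unfolding antilex_less_def using assms(3) by auto
    then show "antilex_less a b" unfolding antilex_less_def using assms(1-3) e1 e2
      by (intro conjI exI[of _ i]) auto
  qed
qed

lemma least_exists:
  assumes "finite H" "H \<noteq> {}" "\<forall>x\<in>H. length x = n"
  shows "\<exists>d\<in>H. \<forall>y\<in>H. y \<noteq> d \<longrightarrow> antilex_less d y"
  using assms
proof (induction H rule: finite_ne_induct)
  case (singleton x) then show ?case by auto
next
  case (insert x F)
  then obtain d where d: "d \<in> F" "\<forall>y\<in>F. y \<noteq> d \<longrightarrow> antilex_less d y" by auto
  have "x \<noteq> d" using d insert by auto
  then have "antilex_less x d \<or> antilex_less d x" using insert d by (intro antilex_total) auto
  then show ?case
  proof
    assume xd: "antilex_less x d"
    show ?thesis
      by (rule bexI[of _ x]) (use xd d antilex_trans in auto)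
  next
    assume "antilex_less d x"
    then show ?thesis using d by auto
  qed
qed

lemma least_props:
  assumes "finite H" "H \<noteq> {}" "\<forall>x\<in>H. length x = n"
  shows "least_elem H \<in> H \<and> (\<forall>y\<in>H. y \<noteq> least_elem H \<longrightarrow> antilex_less (least_elem H) y)"
proof -
  obtain d where d: "d \<in> H" "\<forall>y\<in>H. y \<noteq> d \<longrightarrow> antilex_less d y" using least_exists[OF assms] by blast
  have "least_elem H = d"
    unfolding least_elem_def
  proof (rule the_equality)
    show "d \<in> H \<and> (\<forall>y\<in>H. y \<noteq> d \<longrightarrow> antilex_less d y)" using d by blast
    show "e = d" if "e \<in> H \<and> (\<forall>y\<in>H. y \<noteq> e \<longrightarrow> antilex_less e y)" for e
    proof (rule ccontr)
      assume "e \<noteq> d"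
      then have "antilex_less d e" "antilex_less e d" using that d by auto
      then show False using antilex_trans antilex_irrefl by blast
    qed
  qed
  then show ?thesis using d by simp
qed

lemma link_VR:
  assumes "0 \<le> r"
  shows "link (VR Y r) a = VR {y\<in>Y. y \<noteq> a \<and> a \<in> Y \<and> manhattan y a \<le> r} r"
proof (rule set_eqI, rule iffI)
  fix \<tau> assume "\<tau> \<in> link (VR Y r) a"
  then show "\<tau> \<in> VR {y\<in>Y. y \<noteq> a \<and> a \<in> Y \<and> manhattan y a \<le> r} r"
    unfolding link_def VR_def by auto
next
  fix \<tau> assume t: "\<tau> \<in> VR {y\<in>Y. y \<noteq> a \<and> a \<in> Y \<and> manhattan y a \<le> r} r"
  then have "a \<notin> \<tau>" by (auto simp: VR_def)
  moreover have "insert a \<tau> \<in> VR Y r"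
    using t assms unfolding VR_def by (auto simp: manhattan_self manhattan_sym[of a])
  moreover have "\<tau> \<in> VR Y r" using t unfolding VR_def by auto
  ultimately show "\<tau> \<in> link (VR Y r) a" unfolding link_def by auto
qed

lemma vertices_VR: "0 \<le> r \<Longrightarrow> vertices (VR X r) = X"
  by (auto simp: vertices_def VR_def manhattan_self)

lemma induced_VR: "W \<subseteq> X \<Longrightarrow> induced (VR X r) W = VR W r"
  by (auto simp: induced_def VR_def)

lemma finite_cube: "finite (cube n m)"
proof -
  have "cube n m \<subseteq> {xs. set xs \<subseteq> {0..int m} \<and> length xs = n}"
    by (auto simp: cube_def in_set_conv_nth)
  then show ?thesis using finite_lists_length_eq[of "{0..int m}" n] finite_subset by blast
qed

lemma nrm_manhattan: "length y = n \<Longrightarrow> manhattan y (replicate n 0) = nrm y"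
  by (simp add: manhattan_nth nrm_def)



theorem lemma3p5:
  fixes n m \<alpha> :: nat and r :: int
  assumes "n \<ge> 2" and "m \<ge> 1" and "r \<ge> 3"
    and "1 \<le> \<alpha>" and "\<alpha> < (m + 1) ^ n"
  shows "geom_real (Gamma n m \<alpha> r) homotopy_equivalent_space
           (geom_real (induced (Gamma n m \<alpha> r)
              {x \<in> vertices (Gamma n m \<alpha> r).
                 (\<forall>i<n. \<bar>x ! i\<bar> \<le> r div 2) \<and>
                 (\<forall>j<n. \<forall>k<n. j \<noteq> k \<longrightarrow> \<bar>x ! j\<bar> + \<bar>x ! k\<bar> \<le> (r + 1) div 2)}))"
    (is "?A homotopy_equivalent_space geom_real (induced _ ?W)")
proof -
  have r0: "0 \<le> r" and r3: "r \<ge> 3" using assms by simp_all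
  define Y where "Y = shifted n m \<alpha>"
  define z0 where "z0 = (replicate n 0 :: int list)"
  define N where "N = {y\<in>Y. y \<noteq> z0 \<and> z0 \<in> Y \<and> manhattan y z0 \<le> r}"
  define P where "P x \<longleftrightarrow> (\<forall>i<n. \<bar>x ! i\<bar> \<le> r div 2) \<and>
                 (\<forall>j<n. \<forall>k<n. j \<noteq> k \<longrightarrow> \<bar>x ! j\<bar> + \<bar>x ! k\<bar> \<le> (r + 1) div 2)" for x :: "int list"
  have G: "Gamma n m \<alpha> r = VR N r"
    unfolding Gamma_def Y_def N_def z0_def using link_VR[OF r0] by simp
  have V: "vertices (Gamma n m \<alpha> r) = N" using G vertices_VR[OF r0] by simp
  have W: "?W = {x\<in>N. P x}" using V by (auto simp: P_def)
  have I: "induced (Gamma n m \<alpha> r) ?W = VR {x\<in>N. P x} r"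
    using W G induced_VR[of "{x\<in>N. P x}" N r] by auto
  have main: "geom_real (VR N r) homotopy_equivalent_space geom_real (VR {x\<in>N. P x} r)"
  proof (cases "z0 \<in> Y")
    case False
    then have "N = {}" by (simp add: N_def)
    then show ?thesis by (simp add: homotopy_equivalent_space_refl)
  next
    case True
    define H where "H = cube_removed n m \<alpha>"
    define \<delta> where "\<delta> = least_elem H"
    have Ydef: "Y = (\<lambda>x. map2 (-) x \<delta>) ` H"
      by (simp add: Y_def shifted_def H_def \<delta>_def)
    have Hcube: "H \<subseteq> cube n m" by (auto simp: H_def cube_removed_def)
    have finH: "finite H" using Hcube finite_cube finite_subset by blast
    have Hne: "H \<noteq> {}" using True Ydef by auto
    have lenH: "\<forall>x\<in>H. length x = n" using Hcube by (auto simp: cube_def)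
    have \<delta>H: "\<delta> \<in> H" and \<delta>least: "\<And>y. y \<in> H \<Longrightarrow> y \<noteq> \<delta> \<Longrightarrow> antilex_less \<delta> y"
      using least_props[OF finH Hne lenH] unfolding \<delta>_def by auto
    have \<delta>c: "\<delta> \<in> cube n m" using \<delta>H Hcube by blast
    have len\<delta>: "length \<delta> = n" using \<delta>c by (simp add: cube_def)
    have lenz0: "length z0 = n" by (simp add: z0_def)
    have z0i: "\<And>i. i < n \<Longrightarrow> z0 ! i = 0" by (simp add: z0_def)
    have finN: "finite N"
    proof -
      have "finite Y" using Ydef finH by simp
      then show ?thesis unfolding N_def by simp
    qed
    show ?thesis
    proof (rule VR_collapse[where rk = nrm])
      show "finite N" by (rule finN)
      show "{x \<in> N. P x} \<subseteq> N" by blast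
      show "0 \<le> r" by (rule r0)
      fix v assume vN: "v \<in> N - {x \<in> N. P x}"
      then have vY: "v \<in> Y" and vz: "v \<noteq> z0" and vr: "manhattan v z0 \<le> r" and nP: "\<not> P v"
        by (auto simp: N_def)
      obtain x where xH: "x \<in> H" and vx: "v = map2 (-) x \<delta>" using vY Ydef by auto
      have lenx: "length x = n" using xH lenH by blast
      have lenv: "length v = n" using vx lenx len\<delta> by simp
      have vi: "\<And>i. i < n \<Longrightarrow> v ! i = x ! i - \<delta> ! i" using vx lenx len\<delta> by simp
      have "x \<noteq> \<delta>"
      proof
        assume "x = \<delta>"
        then have "v = z0" using lenv lenz0 vi z0i by (intro nth_equalityI) auto
        then show False using vz by simp
      qed
      then have "antilex_less \<delta> x" using \<delta>least xH by blast
      moreover have "antilex_less \<delta> x = antilex_less z0 v"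
        by (rule antilex_diff) (use len\<delta> lenx lenz0 lenv vi z0i in auto)
      ultimately have posv: "antilex_less (replicate n 0) v" by (simp add: z0_def)
      have nv: "nrm v \<le> r" using vr nrm_manhattan[OF lenv] by (simp add: z0_def)
      obtain w where lw: "length w = n"
        and bet: "\<forall>l<n. (0 \<le> w!l \<and> w!l \<le> v!l) \<or> (v!l \<le> w!l \<and> w!l \<le> 0)"
        and posw: "antilex_less (replicate n 0) w" and nw: "nrm w < nrm v"
        and domw: "\<forall>z. length z = n \<longrightarrow> nrm z \<le> r \<longrightarrow> manhattan z v \<le> r \<longrightarrow> manhattan z w \<le> r"
        using comb[OF lenv r3 posv nv] nP unfolding P_def by blast
      define x' where "x' = map2 (+) w \<delta>"
      have lenx': "length x' = n" using lw len\<delta> by (simp add: x'_def)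
      have x'i: "\<And>i. i < n \<Longrightarrow> x' ! i = w ! i + \<delta> ! i" using lw len\<delta> by (simp add: x'_def)
      have x'c: "x' \<in> cube n m"
      proof -
        have "0 \<le> x' ! l \<and> x' ! l \<le> int m" if "l < n" for l
        proof -
          have "0 \<le> \<delta> ! l" "\<delta> ! l \<le> int m" using \<delta>c that by (auto simp: cube_def)
          moreover have "0 \<le> x ! l" "x ! l \<le> int m" using xH Hcube that by (auto simp: cube_def)
          ultimately show ?thesis using bet that x'i[OF that] vi[OF that] by auto
        qed
        then show ?thesis using lenx' by (simp add: cube_def)
      qed
      have "antilex_less z0 w = antilex_less \<delta> x'"
        by (rule antilex_diff) (use len\<delta> lw lenz0 lenx' x'i z0i in auto)
      then have \<delta>x': "antilex_less \<delta> x'" using posw by (simp add: z0_def)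
      have "\<alpha> \<le> card {u \<in> cube n m. antilex_less u \<delta>}" using \<delta>H by (simp add: H_def cube_removed_def)
      also have "\<dots> \<le> card {u \<in> cube n m. antilex_less u x'}"
        by (rule card_mono) (use finite_cube antilex_trans \<delta>x' in auto)
      finally have x'H: "x' \<in> H" using x'c by (simp add: H_def cube_removed_def)
      have "map2 (-) x' \<delta> = w"
        using lenx' len\<delta> lw x'i by (intro nth_equalityI) auto
      then have wY: "w \<in> Y" using x'H Ydef by force
      have wz: "w \<noteq> z0" using posw antilex_irrefl by (auto simp: z0_def)
      have wr: "manhattan w z0 \<le> r" using nrm_manhattan[OF lw] nw nv by (simp add: z0_def)
      have wN: "w \<in> N" using wY wz wr True by (simp add: N_def)
      show "\<exists>w\<in>N. w \<noteq> v \<and> nrm w < nrm v \<and> (\<forall>z\<in>N. manhattan z v \<le> r \<longrightarrow> manhattan z w \<le> r)"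
      proof (intro bexI conjI ballI impI)
        show "w \<noteq> v" using nw by auto
        show "nrm w < nrm v" by (rule nw)
        fix z assume zN: "z \<in> N" "manhattan z v \<le> r"
        have lz: "length z = n"
        proof -
          obtain y where "y \<in> H" "z = map2 (-) y \<delta>" using zN Ydef by (auto simp: N_def)
          then show ?thesis using lenH len\<delta> by simp
        qed
        have "nrm z \<le> r" using zN(1) nrm_manhattan[OF lz] by (simp add: N_def z0_def)
        then show "manhattan z w \<le> r" using domw lz zN(2) by blast
      qed (rule wN)
    qed
  qed
  show ?thesis using main G I by simp
qed


end
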